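(* Let $(\mathcal{C},\mathbb{E},\mathfrak{s})$ be an extriangulated category and let $\varphi_\bullet=(\varphi_1,\varphi_2,\varphi_3)$ be a morphism of $\mathfrak{s}$-triangles from $X_\bullet=(X_1\xrightarrow{f_1}X_2\xrightarrow{f_2}X_3\overset{\delta}{\dashrightarrow})$ to $Y_\bullet=(Y_1\xrightarrow{g_1}Y_2\xrightarrow{g_2}Y_3\overset{\delta'}{\dashrightarrow})$. Then: (1) The following are equivalent: (a) $\underline{\varphi_\bullet}=0$ in $\mathfrak{s}\textup{-tri}(\mathcal{C})/\mathcal{R}_2$; (b) $\varphi_1$ factors through $f_1$; (c) $\varphi_3$ factors through $g_2$. (2) $\underline{\varphi_\bullet}$ is a monomorphism in $\mathfrak{s}\textup{-tri}(\mathcal{C})/\mathcal{R}_2$ if and only if $\begin{pmatrix} f_1\\ \varphi_1\end{pmatrix}:X_1\to X_2\oplus Y_1$ is a section (split monomorphism).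
   Context: An extriangulated category $(\mathcal{C},\mathbb{E},\mathfrak{s})$ (Nakaoka–Palu) is an additive category with an additive bifunctor $\mathbb{E}:\mathcal{C}^{\mathrm{op}}\times\mathcal{C}\to Ab$ and a realization $\mathfrak{s}$ assigning to each $\delta\in\mathbb{E}(C,A)$ an equivalence class of sequences $A\to B\to C$, giving $\mathfrak{s}$-triangles $A\to B\to C\overset{\delta}{\dashrightarrow}$, satisfying axioms (ET1)–(ET4)$^{\mathrm{op}}$. $\mathfrak{s}\textup{-tri}(\mathcal{C})$ is the category whose objects are $\mathfrak{s}$-triangles and whose morphisms $X_\bullet\to Y_\bullet$ (notation as in the claim) are triples $(\varphi_1,\varphi_2,\varphi_3)$ with $\varphi_2f_1=g_1\varphi_1$, $\varphi_3f_2=g_2\varphi_2$ and $\varphi_{1*}\delta=\varphi_3^*\delta'$, where $a_*\delta=\mathbb{E}(X_3,a)(\delta)$ and $c^*\delta'=\mathbb{E}(c,Y_1)(\delta')$ (morphisms of $\mathfrak{s}$-triangles). $\mathcal{R}_2(X_\bullet,Y_\bullet)$ is the set of morphisms $\varphi_\bullet$ such that $\varphi_3$ factors through $g_2$; it is an ideal of $\mathfrak{s}\textup{-tri}(\mathcal{C})$, and $\underline{\varphi_\bullet}$ denotes the image in the quotient $\mathfrak{s}\textup{-tri}(\mathcal{C})/\mathcal{R}_2$. *)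

theory Defs
  imports Main
begin

section \<open>Extriangulated categories (Nakaoka--Palu), encoded concretely\<close>

text \<open>
  A (small or large) category is given by a carrier of objects ob, hom-sets hom A B,
  composition cp g f (meaning g after f) and identities ide.  The bifunctor E is given by the sets ext C A
  (= E(C,A)), with abelian group structure ead / eng / ezr C A, push-forward
  push a d (= a_* d) and pull-back pull c d (= c^* d).  The realization is encoded by
  the predicate rl A B C f g d, meaning that  A --f--> B --g--> C ..d..>  is an
  s-triangle, i.e. the sequence (f,g) belongs to the class s(d).
\<close>

record ('o, 'm, 'e) extri =
  ob   :: "'o set"
  hom  :: "'o \<Rightarrow> 'o \<Rightarrow> 'm set"
  cp   :: "'m \<Rightarrow> 'm \<Rightarrow> 'm"
  ide  :: "'o \<Rightarrow> 'm"
  ad   :: "'m \<Rightarrow> 'm \<Rightarrow> 'm"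
  ng   :: "'m \<Rightarrow> 'm"
  zr   :: "'o \<Rightarrow> 'o \<Rightarrow> 'm"
  ext  :: "'o \<Rightarrow> 'o \<Rightarrow> 'e set"
  ead  :: "'e \<Rightarrow> 'e \<Rightarrow> 'e"
  eng  :: "'e \<Rightarrow> 'e"
  ezr  :: "'o \<Rightarrow> 'o \<Rightarrow> 'e"
  push :: "'m \<Rightarrow> 'e \<Rightarrow> 'e"
  pull :: "'m \<Rightarrow> 'e \<Rightarrow> 'e"
  rl   :: "'o \<Rightarrow> 'o \<Rightarrow> 'o \<Rightarrow> 'm \<Rightarrow> 'm \<Rightarrow> 'e \<Rightarrow> bool"

definition is_category :: "('o,'m,'e,'x) extri_scheme \<Rightarrow> bool" where
  "is_category X \<longleftrightarrow>
     (\<forall>A\<in>ob X. ide X A \<in> hom X A A) \<and>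
     (\<forall>A\<in>ob X. \<forall>B\<in>ob X. \<forall>D\<in>ob X. \<forall>f\<in>hom X A B. \<forall>g\<in>hom X B D. cp X g f \<in> hom X A D) \<and>
     (\<forall>A\<in>ob X. \<forall>B\<in>ob X. \<forall>f\<in>hom X A B. cp X f (ide X A) = f \<and> cp X (ide X B) f = f) \<and>
     (\<forall>A\<in>ob X. \<forall>B\<in>ob X. \<forall>D\<in>ob X. \<forall>E\<in>ob X. \<forall>f\<in>hom X A B. \<forall>g\<in>hom X B D. \<forall>h\<in>hom X D E.
        cp X h (cp X g f) = cp X (cp X h g) f)"

definition is_abgroup_on :: "'a set \<Rightarrow> ('a \<Rightarrow> 'a \<Rightarrow> 'a) \<Rightarrow> ('a \<Rightarrow> 'a) \<Rightarrow> 'a \<Rightarrow> bool" where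
  "is_abgroup_on S p n z \<longleftrightarrow>
     z \<in> S \<and> (\<forall>x\<in>S. \<forall>y\<in>S. p x y \<in> S) \<and> (\<forall>x\<in>S. n x \<in> S) \<and>
     (\<forall>x\<in>S. \<forall>y\<in>S. \<forall>w\<in>S. p (p x y) w = p x (p y w)) \<and>
     (\<forall>x\<in>S. \<forall>y\<in>S. p x y = p y x) \<and>
     (\<forall>x\<in>S. p x z = x) \<and> (\<forall>x\<in>S. p x (n x) = z)"

definition is_iso :: "('o,'m,'e,'x) extri_scheme \<Rightarrow> 'o \<Rightarrow> 'o \<Rightarrow> 'm \<Rightarrow> bool" where
  "is_iso X A B f \<longleftrightarrow> f \<in> hom X A B \<and>
     (\<exists>g\<in>hom X B A. cp X g f = ide X A \<and> cp X f g = ide X B)"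

definition biprod :: "('o,'m,'e,'x) extri_scheme \<Rightarrow> 'o \<Rightarrow> 'o \<Rightarrow> 'o \<Rightarrow> 'm \<Rightarrow> 'm \<Rightarrow> 'm \<Rightarrow> 'm \<Rightarrow> bool" where
  "biprod X A B P i1 i2 p1 p2 \<longleftrightarrow>
     P \<in> ob X \<and> i1 \<in> hom X A P \<and> i2 \<in> hom X B P \<and> p1 \<in> hom X P A \<and> p2 \<in> hom X P B \<and>
     cp X p1 i1 = ide X A \<and> cp X p2 i2 = ide X B \<and>
     cp X p1 i2 = zr X B A \<and> cp X p2 i1 = zr X A B \<and>
     ad X (cp X i1 p1) (cp X i2 p2) = ide X P"

definition is_additive :: "('o,'m,'e,'x) extri_scheme \<Rightarrow> bool" where
  "is_additive X \<longleftrightarrow> is_category X \<and>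
     (\<forall>A\<in>ob X. \<forall>B\<in>ob X. is_abgroup_on (hom X A B) (ad X) (ng X) (zr X A B)) \<and>
     (\<forall>A\<in>ob X. \<forall>B\<in>ob X. \<forall>D\<in>ob X. \<forall>f\<in>hom X A B. \<forall>f'\<in>hom X A B. \<forall>g\<in>hom X B D. \<forall>g'\<in>hom X B D.
        cp X g (ad X f f') = ad X (cp X g f) (cp X g f') \<and>
        cp X (ad X g g') f = ad X (cp X g f) (cp X g' f)) \<and>
     (\<exists>Z\<in>ob X. \<forall>A\<in>ob X. hom X A Z = {zr X A Z} \<and> hom X Z A = {zr X Z A}) \<and>
     (\<forall>A\<in>ob X. \<forall>B\<in>ob X. \<exists>P i1 i2 p1 p2. biprod X A B P i1 i2 p1 p2)"

definition ET1 :: "('o,'m,'e,'x) extri_scheme \<Rightarrow> bool" where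
  "ET1 X \<longleftrightarrow>
     (\<forall>C\<in>ob X. \<forall>A\<in>ob X. is_abgroup_on (ext X C A) (ead X) (eng X) (ezr X C A)) \<and>
     (\<forall>A\<in>ob X. \<forall>A'\<in>ob X. \<forall>C\<in>ob X. \<forall>a\<in>hom X A A'. \<forall>d\<in>ext X C A. push X a d \<in> ext X C A') \<and>
     (\<forall>A\<in>ob X. \<forall>C\<in>ob X. \<forall>C'\<in>ob X. \<forall>c\<in>hom X C' C. \<forall>d\<in>ext X C A. pull X c d \<in> ext X C' A) \<and>
     (\<forall>A\<in>ob X. \<forall>C\<in>ob X. \<forall>d\<in>ext X C A. push X (ide X A) d = d \<and> pull X (ide X C) d = d) \<and>
     (\<forall>A\<in>ob X. \<forall>A'\<in>ob X. \<forall>A''\<in>ob X. \<forall>C\<in>ob X. \<forall>a\<in>hom X A A'. \<forall>a'\<in>hom X A' A''. \<forall>d\<in>ext X C A.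
        push X (cp X a' a) d = push X a' (push X a d)) \<and>
     (\<forall>A\<in>ob X. \<forall>C\<in>ob X. \<forall>C'\<in>ob X. \<forall>C''\<in>ob X. \<forall>c\<in>hom X C' C. \<forall>c'\<in>hom X C'' C'. \<forall>d\<in>ext X C A.
        pull X (cp X c c') d = pull X c' (pull X c d)) \<and>
     (\<forall>A\<in>ob X. \<forall>A'\<in>ob X. \<forall>C\<in>ob X. \<forall>C'\<in>ob X. \<forall>a\<in>hom X A A'. \<forall>c\<in>hom X C' C. \<forall>d\<in>ext X C A.
        push X a (pull X c d) = pull X c (push X a d)) \<and>
     (\<forall>A\<in>ob X. \<forall>A'\<in>ob X. \<forall>C\<in>ob X. \<forall>a\<in>hom X A A'. \<forall>a'\<in>hom X A A'. \<forall>d\<in>ext X C A. \<forall>d'\<in>ext X C A.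
        push X a (ead X d d') = ead X (push X a d) (push X a d') \<and>
        push X (ad X a a') d = ead X (push X a d) (push X a' d)) \<and>
     (\<forall>A\<in>ob X. \<forall>C\<in>ob X. \<forall>C'\<in>ob X. \<forall>c\<in>hom X C' C. \<forall>c'\<in>hom X C' C. \<forall>d\<in>ext X C A. \<forall>d'\<in>ext X C A.
        pull X c (ead X d d') = ead X (pull X c d) (pull X c d') \<and>
        pull X (ad X c c') d = ead X (pull X c d) (pull X c' d))"

definition seq_equiv :: "('o,'m,'e,'x) extri_scheme \<Rightarrow> 'o \<Rightarrow> 'm \<Rightarrow> 'm \<Rightarrow> 'o \<Rightarrow> 'm \<Rightarrow> 'm \<Rightarrow> bool" where
  "seq_equiv X B f g B' f' g' \<longleftrightarrow>
     (\<exists>b. is_iso X B B' b \<and> cp X b f = f' \<and> cp X g' b = g)"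

text \<open>s assigns to each extension an equivalence class of sequences.\<close>
definition is_realization_map :: "('o,'m,'e,'x) extri_scheme \<Rightarrow> bool" where
  "is_realization_map X \<longleftrightarrow>
     (\<forall>A B C f g d. rl X A B C f g d \<longrightarrow>
        A \<in> ob X \<and> B \<in> ob X \<and> C \<in> ob X \<and> f \<in> hom X A B \<and> g \<in> hom X B C \<and> d \<in> ext X C A) \<and>
     (\<forall>A\<in>ob X. \<forall>C\<in>ob X. \<forall>d\<in>ext X C A. \<exists>B f g. rl X A B C f g d) \<and>
     (\<forall>A B C f g B' f' g' d. rl X A B C f g d \<and> rl X A B' C f' g' d \<longrightarrow> seq_equiv X B f g B' f' g') \<and>
     (\<forall>A B C f g B' f' g' d. rl X A B C f g d \<and> B' \<in> ob X \<and> f' \<in> hom X A B' \<and> g' \<in> hom X B' C \<and>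
        seq_equiv X B f g B' f' g' \<longrightarrow> rl X A B' C f' g' d)"

definition ET2 :: "('o,'m,'e,'x) extri_scheme \<Rightarrow> bool" where
  "ET2 X \<longleftrightarrow> is_realization_map X \<and>
     (\<forall>A B C f g d A' B' C' f' g' d' a c.
        rl X A B C f g d \<and> rl X A' B' C' f' g' d' \<and> a \<in> hom X A A' \<and> c \<in> hom X C C' \<and>
        push X a d = pull X c d' \<longrightarrow>
        (\<exists>b\<in>hom X B B'. cp X b f = cp X f' a \<and> cp X g' b = cp X c g)) \<and>
     (\<forall>A\<in>ob X. \<forall>C\<in>ob X. \<forall>P i1 i2 p1 p2. biprod X A C P i1 i2 p1 p2 \<longrightarrow>
        rl X A P C i1 p2 (ezr X C A)) \<and>
     (\<forall>A B C f g d A' B' C' f' g' d'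
         PA iA1 iA2 pA1 pA2 PB iB1 iB2 pB1 pB2 PC iC1 iC2 pC1 pC2.
        rl X A B C f g d \<and> rl X A' B' C' f' g' d' \<and>
        biprod X A A' PA iA1 iA2 pA1 pA2 \<and> biprod X B B' PB iB1 iB2 pB1 pB2 \<and>
        biprod X C C' PC iC1 iC2 pC1 pC2 \<longrightarrow>
        rl X PA PB PC
           (ad X (cp X iB1 (cp X f pA1)) (cp X iB2 (cp X f' pA2)))
           (ad X (cp X iC1 (cp X g pB1)) (cp X iC2 (cp X g' pB2)))
           (ead X (push X iA1 (pull X pC1 d)) (push X iA2 (pull X pC2 d'))))"

definition ET3 :: "('o,'m,'e,'x) extri_scheme \<Rightarrow> bool" where
  "ET3 X \<longleftrightarrow>
     (\<forall>A B C x y d A' B' C' x' y' d' a b.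
        rl X A B C x y d \<and> rl X A' B' C' x' y' d' \<and> a \<in> hom X A A' \<and> b \<in> hom X B B' \<and>
        cp X b x = cp X x' a \<longrightarrow>
        (\<exists>c\<in>hom X C C'. cp X c y = cp X y' b \<and> push X a d = pull X c d'))"

definition ET3op :: "('o,'m,'e,'x) extri_scheme \<Rightarrow> bool" where
  "ET3op X \<longleftrightarrow>
     (\<forall>A B C x y d A' B' C' x' y' d' b c.
        rl X A B C x y d \<and> rl X A' B' C' x' y' d' \<and> b \<in> hom X B B' \<and> c \<in> hom X C C' \<and>
        cp X c y = cp X y' b \<longrightarrow>
        (\<exists>a\<in>hom X A A'. cp X b x = cp X x' a \<and> push X a d = pull X c d'))"

definition ET4 :: "('o,'m,'e,'x) extri_scheme \<Rightarrow> bool" where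
  "ET4 X \<longleftrightarrow>
     (\<forall>A B D f f' d C F g g' d'.
        rl X A B D f f' d \<and> rl X B C F g g' d' \<longrightarrow>
        (\<exists>E h' d'' dd e. E \<in> ob X \<and> h' \<in> hom X C E \<and> dd \<in> hom X D E \<and> e \<in> hom X E F \<and>
           rl X A C E (cp X g f) h' d'' \<and>
           rl X D E F dd e (push X f' d') \<and>
           cp X h' g = cp X dd f' \<and> cp X e h' = g' \<and>
           d = pull X dd d'' \<and> push X f d'' = pull X e d'))"

definition ET4op :: "('o,'m,'e,'x) extri_scheme \<Rightarrow> bool" where
  "ET4op X \<longleftrightarrow>
     (\<forall>D A B f' f d F C g' g d'.
        rl X D A B f' f d \<and> rl X F B C g' g d' \<longrightarrow>
        (\<exists>E h' d'' dd e. E \<in> ob X \<and> h' \<in> hom X E A \<and> dd \<in> hom X D E \<and> e \<in> hom X E F \<and>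
           rl X E A C h' (cp X g f) d'' \<and>
           rl X D E F dd e (pull X g' d) \<and>
           cp X h' dd = f' \<and> cp X f h' = cp X g' e \<and>
           d' = push X e d'' \<and> push X dd d = pull X g d''))"

definition extriangulated :: "('o,'m,'e,'x) extri_scheme \<Rightarrow> bool" where
  "extriangulated X \<longleftrightarrow> is_additive X \<and> ET1 X \<and> ET2 X \<and> ET3 X \<and> ET3op X \<and> ET4 X \<and> ET4op X"

section \<open>The category s-tri(C) and the ideal R_2\<close>

type_synonym ('o,'m,'e) stri = "'o \<times> 'o \<times> 'o \<times> 'm \<times> 'm \<times> 'e"

definition is_stri :: "('o,'m,'e,'x) extri_scheme \<Rightarrow> ('o,'m,'e) stri \<Rightarrow> bool" where
  "is_stri X T \<longleftrightarrow> (case T of (A,B,C,f,g,d) \<Rightarrow> rl X A B C f g d)"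

definition stri_mor :: "('o,'m,'e,'x) extri_scheme \<Rightarrow> ('o,'m,'e) stri \<Rightarrow> ('o,'m,'e) stri \<Rightarrow> 'm \<times> 'm \<times> 'm \<Rightarrow> bool" where
  "stri_mor X T T' p \<longleftrightarrow> is_stri X T \<and> is_stri X T' \<and>
     (case T of (X1,X2,X3,f1,f2,d) \<Rightarrow> case T' of (Y1,Y2,Y3,g1,g2,d') \<Rightarrow>
      case p of (p1,p2,p3) \<Rightarrow>
        p1 \<in> hom X X1 Y1 \<and> p2 \<in> hom X X2 Y2 \<and> p3 \<in> hom X X3 Y3 \<and>
        cp X p2 f1 = cp X g1 p1 \<and> cp X p3 f2 = cp X g2 p2 \<and>
        push X p1 d = pull X p3 d')"

definition stri_comp :: "('o,'m,'e,'x) extri_scheme \<Rightarrow> 'm \<times> 'm \<times> 'm \<Rightarrow> 'm \<times> 'm \<times> 'm \<Rightarrow> 'm \<times> 'm \<times> 'm" where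
  "stri_comp X q p = (case q of (q1,q2,q3) \<Rightarrow> case p of (p1,p2,p3) \<Rightarrow>
      (cp X q1 p1, cp X q2 p2, cp X q3 p3))"

definition stri_diff :: "('o,'m,'e,'x) extri_scheme \<Rightarrow> 'm \<times> 'm \<times> 'm \<Rightarrow> 'm \<times> 'm \<times> 'm \<Rightarrow> 'm \<times> 'm \<times> 'm" where
  "stri_diff X p q = (case p of (p1,p2,p3) \<Rightarrow> case q of (q1,q2,q3) \<Rightarrow>
      (ad X p1 (ng X q1), ad X p2 (ng X q2), ad X p3 (ng X q3)))"

definition stri_zero :: "('o,'m,'e,'x) extri_scheme \<Rightarrow> ('o,'m,'e) stri \<Rightarrow> ('o,'m,'e) stri \<Rightarrow> 'm \<times> 'm \<times> 'm" where
  "stri_zero X T T' = (case T of (X1,X2,X3,_) \<Rightarrow> case T' of (Y1,Y2,Y3,_) \<Rightarrow>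
      (zr X X1 Y1, zr X X2 Y2, zr X X3 Y3))"

definition R2 :: "('o,'m,'e,'x) extri_scheme \<Rightarrow> ('o,'m,'e) stri \<Rightarrow> ('o,'m,'e) stri \<Rightarrow> 'm \<times> 'm \<times> 'm \<Rightarrow> bool" where
  "R2 X T T' p \<longleftrightarrow> stri_mor X T T' p \<and>
     (case T of (X1,X2,X3,f1,f2,d) \<Rightarrow> case T' of (Y1,Y2,Y3,g1,g2,d') \<Rightarrow>
      case p of (p1,p2,p3) \<Rightarrow> (\<exists>v\<in>hom X X3 Y2. p3 = cp X g2 v))"

text \<open>Equality of classes in the quotient s-tri(C)/R_2: p and q (both T -> T') have the
  same image iff p - q lies in R_2(T,T').\<close>
definition quot_eq :: "('o,'m,'e,'x) extri_scheme \<Rightarrow> ('o,'m,'e) stri \<Rightarrow> ('o,'m,'e) stri \<Rightarrow> 'm \<times> 'm \<times> 'm \<Rightarrow> 'm \<times> 'm \<times> 'm \<Rightarrow> bool" where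
  "quot_eq X T T' p q \<longleftrightarrow> R2 X T T' (stri_diff X p q)"

definition quot_mono :: "('o,'m,'e,'x) extri_scheme \<Rightarrow> ('o,'m,'e) stri \<Rightarrow> ('o,'m,'e) stri \<Rightarrow> 'm \<times> 'm \<times> 'm \<Rightarrow> bool" where
  "quot_mono X T T' p \<longleftrightarrow>
     (\<forall>W q q'. is_stri X W \<and> stri_mor X W T q \<and> stri_mor X W T q' \<and>
        quot_eq X W T' (stri_comp X p q) (stri_comp X p q') \<longrightarrow> quot_eq X W T q q')"

end

theory Submission
  imports Defs
begin


lemma ag_idem: "is_abgroup_on S p n z \<Longrightarrow> x\<in>S \<Longrightarrow> p x x = x \<Longrightarrow> x = z"
  unfolding is_abgroup_on_def by metis

lemma ag_inv: "is_abgroup_on S p n z \<Longrightarrow> x\<in>S \<Longrightarrow> y\<in>S \<Longrightarrow> p x y = z \<Longrightarrow> y = n x"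
  unfolding is_abgroup_on_def by metis

lemma ag_zl: "is_abgroup_on S p n z \<Longrightarrow> x\<in>S \<Longrightarrow> p z x = x"
  unfolding is_abgroup_on_def by metis

lemma ag_zr: "is_abgroup_on S p n z \<Longrightarrow> x\<in>S \<Longrightarrow> p x z = x"
  unfolding is_abgroup_on_def by metis

lemma ag_z: "is_abgroup_on S p n z \<Longrightarrow> z \<in> S"
  unfolding is_abgroup_on_def by metis

lemma ag_p: "is_abgroup_on S p n z \<Longrightarrow> x\<in>S \<Longrightarrow> y\<in>S \<Longrightarrow> p x y \<in> S"
  unfolding is_abgroup_on_def by metis

lemma ag_n: "is_abgroup_on S p n z \<Longrightarrow> x\<in>S \<Longrightarrow> n x \<in> S"
  unfolding is_abgroup_on_def by metis

lemma ag_ninv: "is_abgroup_on S p n z \<Longrightarrow> x\<in>S \<Longrightarrow> p x (n x) = z"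
  unfolding is_abgroup_on_def by metis

lemma ag_nz: "is_abgroup_on S p n z \<Longrightarrow> n z = z"
  by (metis ag_inv ag_z ag_zr)

lemma ag_sub: "is_abgroup_on S p n z \<Longrightarrow> a\<in>S \<Longrightarrow> b\<in>S \<Longrightarrow> p a (n b) = c \<Longrightarrow> a = p c b"
  unfolding is_abgroup_on_def by metis

locale EX =
  fixes X :: "('o,'m,'e) extri"
  assumes ex: "extriangulated X"
begin

lemma add: "is_additive X" using ex by (simp add: extriangulated_def)
lemma cat: "is_category X" using add by (simp add: is_additive_def)

lemma ide_hom[simp,intro]: "A \<in> ob X \<Longrightarrow> ide X A \<in> hom X A A"
  using cat by (simp add: is_category_def)
lemma cp_hom[intro]: "A \<in> ob X \<Longrightarrow> B \<in> ob X \<Longrightarrow> D \<in> ob X \<Longrightarrow> f \<in> hom X A B \<Longrightarrow> g \<in> hom X B D \<Longrightarrow> cp X g f \<in> hom X A D"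
  using cat unfolding is_category_def by blast
lemma id_r[simp]: "A \<in> ob X \<Longrightarrow> B \<in> ob X \<Longrightarrow> f \<in> hom X A B \<Longrightarrow> cp X f (ide X A) = f"
  using cat unfolding is_category_def by blast
lemma id_l[simp]: "A \<in> ob X \<Longrightarrow> B \<in> ob X \<Longrightarrow> f \<in> hom X A B \<Longrightarrow> cp X (ide X B) f = f"
  using cat unfolding is_category_def by blast
lemma assoc: "A \<in> ob X \<Longrightarrow> B \<in> ob X \<Longrightarrow> D \<in> ob X \<Longrightarrow> E \<in> ob X \<Longrightarrow> f \<in> hom X A B \<Longrightarrow> g \<in> hom X B D \<Longrightarrow> h \<in> hom X D E \<Longrightarrow>
   cp X h (cp X g f) = cp X (cp X h g) f"
  using cat unfolding is_category_def by blast

lemma HG: "A \<in> ob X \<Longrightarrow> B \<in> ob X \<Longrightarrow> is_abgroup_on (hom X A B) (ad X) (ng X) (zr X A B)"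
  using add unfolding is_additive_def by blast

lemma zr_hom[simp,intro]: "A \<in> ob X \<Longrightarrow> B \<in> ob X \<Longrightarrow> zr X A B \<in> hom X A B"
  using HG ag_z by metis
lemma ad_hom[intro]: "A \<in> ob X \<Longrightarrow> B \<in> ob X \<Longrightarrow> f \<in> hom X A B \<Longrightarrow> g \<in> hom X A B \<Longrightarrow> ad X f g \<in> hom X A B"
  using HG ag_p by metis
lemma ng_hom[intro]: "A \<in> ob X \<Longrightarrow> B \<in> ob X \<Longrightarrow> f \<in> hom X A B \<Longrightarrow> ng X f \<in> hom X A B"
  using HG ag_n by metis
lemma ad_zr[simp]: "A \<in> ob X \<Longrightarrow> B \<in> ob X \<Longrightarrow> f \<in> hom X A B \<Longrightarrow> ad X f (zr X A B) = f"
  using HG ag_zr by metis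
lemma zr_ad[simp]: "A \<in> ob X \<Longrightarrow> B \<in> ob X \<Longrightarrow> f \<in> hom X A B \<Longrightarrow> ad X (zr X A B) f = f"
  using HG ag_zl by metis
lemma ng_zr[simp]: "A \<in> ob X \<Longrightarrow> B \<in> ob X \<Longrightarrow> ng X (zr X A B) = zr X A B"
  using HG ag_nz by metis
lemma ad_ng[simp]: "A \<in> ob X \<Longrightarrow> B \<in> ob X \<Longrightarrow> f \<in> hom X A B \<Longrightarrow> ad X f (ng X f) = zr X A B"
  using HG ag_ninv by metis

lemma dist_l: "A \<in> ob X \<Longrightarrow> B \<in> ob X \<Longrightarrow> D \<in> ob X \<Longrightarrow> f \<in> hom X A B \<Longrightarrow> f' \<in> hom X A B \<Longrightarrow> g \<in> hom X B D \<Longrightarrow>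
   cp X g (ad X f f') = ad X (cp X g f) (cp X g f')"
  using add unfolding is_additive_def by blast
lemma dist_r: "A \<in> ob X \<Longrightarrow> B \<in> ob X \<Longrightarrow> D \<in> ob X \<Longrightarrow> f \<in> hom X A B \<Longrightarrow> g \<in> hom X B D \<Longrightarrow> g' \<in> hom X B D \<Longrightarrow>
   cp X (ad X g g') f = ad X (cp X g f) (cp X g' f)"
  using add unfolding is_additive_def by blast

lemma cp_zr_r[simp]: "A \<in> ob X \<Longrightarrow> B \<in> ob X \<Longrightarrow> D \<in> ob X \<Longrightarrow> g \<in> hom X B D \<Longrightarrow> cp X g (zr X A B) = zr X A D"
proof -
  assume a: "A \<in> ob X" "B \<in> ob X" "D \<in> ob X" "g \<in> hom X B D"
  have "cp X g (ad X (zr X A B) (zr X A B)) = ad X (cp X g (zr X A B)) (cp X g (zr X A B))"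
    using a dist_l by blast
  then have "ad X (cp X g (zr X A B)) (cp X g (zr X A B)) = cp X g (zr X A B)" using a by simp
  then show ?thesis using ag_idem[OF HG[of A D]] a cp_hom zr_hom by metis
qed

lemma cp_zr_l[simp]: "A \<in> ob X \<Longrightarrow> B \<in> ob X \<Longrightarrow> D \<in> ob X \<Longrightarrow> f \<in> hom X A B \<Longrightarrow> cp X (zr X B D) f = zr X A D"
proof -
  assume a: "A \<in> ob X" "B \<in> ob X" "D \<in> ob X" "f \<in> hom X A B"
  have "cp X (ad X (zr X B D) (zr X B D)) f = ad X (cp X (zr X B D) f) (cp X (zr X B D) f)"
    using a dist_r by blast
  then have "ad X (cp X (zr X B D) f) (cp X (zr X B D) f) = cp X (zr X B D) f" using a by simp
  then show ?thesis using ag_idem[OF HG[of A D]] a cp_hom zr_hom by metis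
qed

lemma cp_ng_r: "A \<in> ob X \<Longrightarrow> B \<in> ob X \<Longrightarrow> D \<in> ob X \<Longrightarrow> f \<in> hom X A B \<Longrightarrow> g \<in> hom X B D \<Longrightarrow> cp X g (ng X f) = ng X (cp X g f)"
proof -
  assume a: "A \<in> ob X" "B \<in> ob X" "D \<in> ob X" "f \<in> hom X A B" "g \<in> hom X B D"
  have "ad X (cp X g f) (cp X g (ng X f)) = cp X g (ad X f (ng X f))"
    using a dist_l ng_hom by metis
  also have "\<dots> = zr X A D" using a by simp
  finally show ?thesis using ag_inv[OF HG[of A D]] a cp_hom ng_hom by metis
qed

lemma cp_ng_l: "A \<in> ob X \<Longrightarrow> B \<in> ob X \<Longrightarrow> D \<in> ob X \<Longrightarrow> f \<in> hom X A B \<Longrightarrow> g \<in> hom X B D \<Longrightarrow> cp X (ng X g) f = ng X (cp X g f)"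
proof -
  assume a: "A \<in> ob X" "B \<in> ob X" "D \<in> ob X" "f \<in> hom X A B" "g \<in> hom X B D"
  have "ad X (cp X g f) (cp X (ng X g) f) = cp X (ad X g (ng X g)) f"
    using a dist_r ng_hom by metis
  also have "\<dots> = zr X A D" using a by simp
  finally show ?thesis using ag_inv[OF HG[of A D]] a cp_hom ng_hom by metis
qed

lemma zero_obj: "\<exists>Z\<in>ob X. \<forall>A\<in>ob X. hom X A Z = {zr X A Z} \<and> hom X Z A = {zr X Z A}"
  using add unfolding is_additive_def by blast

lemma biprod_ex: "A \<in> ob X \<Longrightarrow> B \<in> ob X \<Longrightarrow> \<exists>P i1 i2 p1 p2. biprod X A B P i1 i2 p1 p2"
  using add unfolding is_additive_def by blast

end


context EX begin

lemma et1: "ET1 X" using ex by (simp add: extriangulated_def)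
lemmas E1parts = et1[unfolded ET1_def]
lemma EG: "C \<in> ob X \<Longrightarrow> A \<in> ob X \<Longrightarrow> is_abgroup_on (ext X C A) (ead X) (eng X) (ezr X C A)"
  using E1parts[THEN conjunct1] by blast
lemma ezr_ext[simp,intro]: "C \<in> ob X \<Longrightarrow> A \<in> ob X \<Longrightarrow> ezr X C A \<in> ext X C A"
  using EG ag_z by metis
lemma push_ext[intro]: "A \<in> ob X \<Longrightarrow> A' \<in> ob X \<Longrightarrow> C \<in> ob X \<Longrightarrow> a \<in> hom X A A' \<Longrightarrow> d \<in> ext X C A \<Longrightarrow> push X a d \<in> ext X C A'"
  using E1parts[THEN conjunct2, THEN conjunct1] by blast
lemma pull_ext[intro]: "A \<in> ob X \<Longrightarrow> C \<in> ob X \<Longrightarrow> C' \<in> ob X \<Longrightarrow> c \<in> hom X C' C \<Longrightarrow> d \<in> ext X C A \<Longrightarrow> pull X c d \<in> ext X C' A"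
  using E1parts[THEN conjunct2, THEN conjunct2, THEN conjunct1] by blast
lemma push_id[simp]: "A \<in> ob X \<Longrightarrow> C \<in> ob X \<Longrightarrow> d \<in> ext X C A \<Longrightarrow> push X (ide X A) d = d"
  using E1parts[THEN conjunct2, THEN conjunct2, THEN conjunct2, THEN conjunct1] by blast
lemma pull_id[simp]: "A \<in> ob X \<Longrightarrow> C \<in> ob X \<Longrightarrow> d \<in> ext X C A \<Longrightarrow> pull X (ide X C) d = d"
  using E1parts[THEN conjunct2, THEN conjunct2, THEN conjunct2, THEN conjunct1] by blast
lemma push_cp: "A \<in> ob X \<Longrightarrow> A' \<in> ob X \<Longrightarrow> A'' \<in> ob X \<Longrightarrow> C \<in> ob X \<Longrightarrow> a \<in> hom X A A' \<Longrightarrow> a' \<in> hom X A' A'' \<Longrightarrow> d \<in> ext X C A \<Longrightarrow>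
        push X (cp X a' a) d = push X a' (push X a d)"
  using E1parts[THEN conjunct2, THEN conjunct2, THEN conjunct2, THEN conjunct2, THEN conjunct1] by blast
lemma pull_cp: "A \<in> ob X \<Longrightarrow> C \<in> ob X \<Longrightarrow> C' \<in> ob X \<Longrightarrow> C'' \<in> ob X \<Longrightarrow> c \<in> hom X C' C \<Longrightarrow> c' \<in> hom X C'' C' \<Longrightarrow> d \<in> ext X C A \<Longrightarrow>
        pull X (cp X c c') d = pull X c' (pull X c d)"
  using E1parts[THEN conjunct2, THEN conjunct2, THEN conjunct2, THEN conjunct2, THEN conjunct2, THEN conjunct1] by blast
lemma push_pull: "A \<in> ob X \<Longrightarrow> A' \<in> ob X \<Longrightarrow> C \<in> ob X \<Longrightarrow> C' \<in> ob X \<Longrightarrow> a \<in> hom X A A' \<Longrightarrow> c \<in> hom X C' C \<Longrightarrow> d \<in> ext X C A \<Longrightarrow>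
        push X a (pull X c d) = pull X c (push X a d)"
  using E1parts[THEN conjunct2, THEN conjunct2, THEN conjunct2, THEN conjunct2, THEN conjunct2, THEN conjunct2, THEN conjunct1] by blast
lemma push_add: "A \<in> ob X \<Longrightarrow> A' \<in> ob X \<Longrightarrow> C \<in> ob X \<Longrightarrow> a \<in> hom X A A' \<Longrightarrow> a' \<in> hom X A A' \<Longrightarrow> d \<in> ext X C A \<Longrightarrow> d' \<in> ext X C A \<Longrightarrow>
        push X a (ead X d d') = ead X (push X a d) (push X a d') \<and>
        push X (ad X a a') d = ead X (push X a d) (push X a' d)"
  using E1parts[THEN conjunct2, THEN conjunct2, THEN conjunct2, THEN conjunct2, THEN conjunct2, THEN conjunct2, THEN conjunct2, THEN conjunct1] by blast
lemma pull_add: "A \<in> ob X \<Longrightarrow> C \<in> ob X \<Longrightarrow> C' \<in> ob X \<Longrightarrow> c \<in> hom X C' C \<Longrightarrow> c' \<in> hom X C' C \<Longrightarrow> d \<in> ext X C A \<Longrightarrow> d' \<in> ext X C A \<Longrightarrow>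
        pull X c (ead X d d') = ead X (pull X c d) (pull X c d') \<and>
        pull X (ad X c c') d = ead X (pull X c d) (pull X c' d)"
  using E1parts[THEN conjunct2, THEN conjunct2, THEN conjunct2, THEN conjunct2, THEN conjunct2, THEN conjunct2, THEN conjunct2, THEN conjunct2] by blast

lemma push_ezr[simp]: "A \<in> ob X \<Longrightarrow> A' \<in> ob X \<Longrightarrow> C \<in> ob X \<Longrightarrow> a \<in> hom X A A' \<Longrightarrow> push X a (ezr X C A) = ezr X C A'"
proof -
  assume h: "A \<in> ob X" "A' \<in> ob X" "C \<in> ob X" "a \<in> hom X A A'"
  have e: "ead X (ezr X C A) (ezr X C A) = ezr X C A" using ag_zr[OF EG] h by blast
  have "push X a (ead X (ezr X C A) (ezr X C A)) = ead X (push X a (ezr X C A)) (push X a (ezr X C A))"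
    using push_add h by blast
  then show ?thesis using e ag_idem[OF EG[of C A']] h push_ext ezr_ext by metis
qed

lemma pull_ezr[simp]: "A \<in> ob X \<Longrightarrow> C \<in> ob X \<Longrightarrow> C' \<in> ob X \<Longrightarrow> c \<in> hom X C' C \<Longrightarrow> pull X c (ezr X C A) = ezr X C' A"
proof -
  assume h: "A \<in> ob X" "C \<in> ob X" "C' \<in> ob X" "c \<in> hom X C' C"
  have e: "ead X (ezr X C A) (ezr X C A) = ezr X C A" using ag_zr[OF EG] h by blast
  have "pull X c (ead X (ezr X C A) (ezr X C A)) = ead X (pull X c (ezr X C A)) (pull X c (ezr X C A))"
    using pull_add h by blast
  then show ?thesis using e ag_idem[OF EG[of C' A]] h pull_ext ezr_ext by metis
qed

lemma push_zr[simp]: "A \<in> ob X \<Longrightarrow> A' \<in> ob X \<Longrightarrow> C \<in> ob X \<Longrightarrow> d \<in> ext X C A \<Longrightarrow> push X (zr X A A') d = ezr X C A'"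
proof -
  assume h: "A \<in> ob X" "A' \<in> ob X" "C \<in> ob X" "d \<in> ext X C A"
  have "push X (ad X (zr X A A') (zr X A A')) d = ead X (push X (zr X A A') d) (push X (zr X A A') d)"
    using push_add h by blast
  then show ?thesis using ag_idem[OF EG[of C A']] h push_ext zr_hom ad_zr by metis
qed

lemma pull_zr[simp]: "A \<in> ob X \<Longrightarrow> C \<in> ob X \<Longrightarrow> C' \<in> ob X \<Longrightarrow> d \<in> ext X C A \<Longrightarrow> pull X (zr X C' C) d = ezr X C' A"
proof -
  assume h: "A \<in> ob X" "C \<in> ob X" "C' \<in> ob X" "d \<in> ext X C A"
  have "pull X (ad X (zr X C' C) (zr X C' C)) d = ead X (pull X (zr X C' C) d) (pull X (zr X C' C) d)"
    using pull_add h by blast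
  then show ?thesis using ag_idem[OF EG[of C' A]] h pull_ext zr_hom ad_zr by metis
qed

lemma push_ng: "A \<in> ob X \<Longrightarrow> A' \<in> ob X \<Longrightarrow> C \<in> ob X \<Longrightarrow> a \<in> hom X A A' \<Longrightarrow> d \<in> ext X C A \<Longrightarrow> push X (ng X a) d = eng X (push X a d)"
proof -
  assume h: "A \<in> ob X" "A' \<in> ob X" "C \<in> ob X" "a \<in> hom X A A'" "d \<in> ext X C A"
  have "ead X (push X a d) (push X (ng X a) d) = push X (ad X a (ng X a)) d"
    using push_add h ng_hom by metis
  also have "\<dots> = ezr X C A'" using h by simp
  finally show ?thesis using ag_inv[OF EG[of C A']] h push_ext ng_hom by metis
qed

lemma pull_ng: "A \<in> ob X \<Longrightarrow> C \<in> ob X \<Longrightarrow> C' \<in> ob X \<Longrightarrow> c \<in> hom X C' C \<Longrightarrow> d \<in> ext X C A \<Longrightarrow> pull X (ng X c) d = eng X (pull X c d)"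
proof -
  assume h: "A \<in> ob X" "C \<in> ob X" "C' \<in> ob X" "c \<in> hom X C' C" "d \<in> ext X C A"
  have "ead X (pull X c d) (pull X (ng X c) d) = pull X (ad X c (ng X c)) d"
    using pull_add h ng_hom by metis
  also have "\<dots> = ezr X C' A" using h by simp
  finally show ?thesis using ag_inv[OF EG[of C' A]] h pull_ext ng_hom by metis
qed

lemma et2: "ET2 X" using ex by (simp add: extriangulated_def)
lemmas E2parts = et2[unfolded ET2_def]
lemmas RMparts = E2parts[THEN conjunct1, unfolded is_realization_map_def]
lemma RL: "rl X A B C f g d \<Longrightarrow> A \<in> ob X \<and> B \<in> ob X \<and> C \<in> ob X \<and> f \<in> hom X A B \<and> g \<in> hom X B C \<and> d \<in> ext X C A"
  using RMparts[THEN conjunct1] by blast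
lemma RL_ex: "A \<in> ob X \<Longrightarrow> C \<in> ob X \<Longrightarrow> d \<in> ext X C A \<Longrightarrow> \<exists>B f g. rl X A B C f g d"
  using RMparts[THEN conjunct2, THEN conjunct1] by blast
lemma ET2a: "rl X A B C f g d \<Longrightarrow> rl X A' B' C' f' g' d' \<Longrightarrow> a \<in> hom X A A' \<Longrightarrow> c \<in> hom X C C' \<Longrightarrow>
        push X a d = pull X c d' \<Longrightarrow>
        (\<exists>b\<in>hom X B B'. cp X b f = cp X f' a \<and> cp X g' b = cp X c g)"
  using E2parts[THEN conjunct2, THEN conjunct1] by blast
lemma split: "A \<in> ob X \<Longrightarrow> C \<in> ob X \<Longrightarrow> biprod X A C P i1 i2 p1 p2 \<Longrightarrow> rl X A P C i1 p2 (ezr X C A)"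
  using E2parts[THEN conjunct2, THEN conjunct2, THEN conjunct1] by blast
lemma ET3r: "rl X A B C x y d \<Longrightarrow> rl X A' B' C' x' y' d' \<Longrightarrow> a \<in> hom X A A' \<Longrightarrow> b \<in> hom X B B' \<Longrightarrow>
        cp X b x = cp X x' a \<Longrightarrow>
        (\<exists>c\<in>hom X C C'. cp X c y = cp X y' b \<and> push X a d = pull X c d')"
  using ex unfolding extriangulated_def ET3_def by (elim conjE) blast
lemma ET3opr: "rl X A B C x y d \<Longrightarrow> rl X A' B' C' x' y' d' \<Longrightarrow> b \<in> hom X B B' \<Longrightarrow> c \<in> hom X C C' \<Longrightarrow>
        cp X c y = cp X y' b \<Longrightarrow>
        (\<exists>a\<in>hom X A A'. cp X b x = cp X x' a \<and> push X a d = pull X c d')"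
  using ex unfolding extriangulated_def ET3op_def by (elim conjE) blast

lemma bp_facts: assumes "biprod X A B P i1 i2 p1 p2" shows
     "P \<in> ob X" "i1 \<in> hom X A P" "i2 \<in> hom X B P" "p1 \<in> hom X P A" "p2 \<in> hom X P B"
     "cp X p1 i1 = ide X A" "cp X p2 i2 = ide X B"
     "cp X p1 i2 = zr X B A" "cp X p2 i1 = zr X A B"
     "ad X (cp X i1 p1) (cp X i2 p2) = ide X P"
  using assms by (simp_all add: biprod_def)

lemma E1: assumes r: "rl X A B C f g d" shows "push X f d = ezr X C B"
proof -
  from r have o: "A \<in> ob X" "B \<in> ob X" "C \<in> ob X" "f \<in> hom X A B" "g \<in> hom X B C" "d \<in> ext X C A"
    using RL by auto
  obtain Z where Z: "Z \<in> ob X" "\<And>A. A\<in>ob X \<Longrightarrow> hom X A Z = {zr X A Z} \<and> hom X Z A = {zr X Z A}"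
    using zero_obj by blast
  have iz: "ide X Z = zr X Z Z" using Z ide_hom by blast
  have "biprod X B Z B (ide X B) (zr X Z B) (ide X B) (zr X B Z)"
    unfolding biprod_def using o Z iz by simp
  then have s: "rl X B B Z (ide X B) (zr X B Z) (ezr X Z B)" using split o Z by blast
  have "cp X (zr X C Z) g = cp X (zr X B Z) (ide X B)" using o Z by simp
  from ET3opr[OF r s _ _ this] o Z obtain a where
    a: "a \<in> hom X A B" "cp X (ide X B) f = cp X (ide X B) a" "push X a d = pull X (zr X C Z) (ezr X Z B)"
    by blast
  then have "a = f" using o by simp
  then show ?thesis using a o Z by simp
qed

lemma E2: assumes r: "rl X A B C f g d" shows "pull X g d = ezr X B A"
proof -
  from r have o: "A \<in> ob X" "B \<in> ob X" "C \<in> ob X" "f \<in> hom X A B" "g \<in> hom X B C" "d \<in> ext X C A"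
    using RL by auto
  obtain Z where Z: "Z \<in> ob X" "\<And>A. A\<in>ob X \<Longrightarrow> hom X A Z = {zr X A Z} \<and> hom X Z A = {zr X Z A}"
    using zero_obj by blast
  have iz: "ide X Z = zr X Z Z" using Z ide_hom by blast
  have "biprod X Z B B (zr X Z B) (ide X B) (zr X B Z) (ide X B)"
    unfolding biprod_def using o Z iz by simp
  then have s: "rl X Z B B (zr X Z B) (ide X B) (ezr X B Z)" using split o Z by blast
  have "cp X (ide X B) (zr X Z B) = cp X f (zr X Z A)" using o Z by simp
  from ET3r[OF s r _ _ this] o Z obtain c where
    c: "c \<in> hom X B C" "cp X c (ide X B) = cp X g (ide X B)" "push X (zr X Z A) (ezr X B Z) = pull X c d"
    by blast
  then have "c = g" using o by simp
  then show ?thesis using c o Z by simp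
qed

lemma E3: assumes r: "rl X A B C f g d" and h: "A' \<in> ob X" "a \<in> hom X A A'" "push X a d = ezr X C A'"
  shows "\<exists>u\<in>hom X B A'. a = cp X u f"
proof -
  from r have o: "A \<in> ob X" "B \<in> ob X" "C \<in> ob X" "f \<in> hom X A B" "g \<in> hom X B C" "d \<in> ext X C A"
    using RL by auto
  obtain P i1 i2 q1 q2 where bp: "biprod X A' C P i1 i2 q1 q2" using biprod_ex h o by blast
  note b = bp_facts[OF bp]
  have s: "rl X A' P C i1 q2 (ezr X C A')" using split bp h o by blast
  have "push X a d = pull X (ide X C) (ezr X C A')" using h o by simp
  from ET2a[OF r s h(2) _ this] o obtain bb where
    bb: "bb \<in> hom X B P" "cp X bb f = cp X i1 a" by blast
  have "cp X (cp X q1 bb) f = cp X q1 (cp X bb f)" using assoc[of A B P A' f bb q1] o b bb h by simp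
  also have "\<dots> = cp X q1 (cp X i1 a)" using bb by simp
  also have "\<dots> = cp X (cp X q1 i1) a" using assoc[of A A' P A' a i1 q1] o b bb h by simp
  also have "\<dots> = a" using b h o by simp
  finally show ?thesis using b bb h o by blast
qed

lemma E4: assumes r: "rl X A B C f g d" and h: "C' \<in> ob X" "c \<in> hom X C' C" "pull X c d = ezr X C' A"
  shows "\<exists>u\<in>hom X C' B. c = cp X g u"
proof -
  from r have o: "A \<in> ob X" "B \<in> ob X" "C \<in> ob X" "f \<in> hom X A B" "g \<in> hom X B C" "d \<in> ext X C A"
    using RL by auto
  obtain P i1 i2 q1 q2 where bp: "biprod X A C' P i1 i2 q1 q2" using biprod_ex h o by blast
  note b = bp_facts[OF bp]
  have s: "rl X A P C' i1 q2 (ezr X C' A)" using split bp h o by blast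
  have "push X (ide X A) (ezr X C' A) = pull X c d" using h o by simp
  from ET2a[OF s r _ h(2) this] o obtain bb where
    bb: "bb \<in> hom X P B" "cp X g bb = cp X c q2" by blast
  have "cp X g (cp X bb i2) = cp X (cp X g bb) i2" using assoc[of C' P B C i2 bb g] o b bb h by simp
  also have "\<dots> = cp X (cp X c q2) i2" using bb by simp
  also have "\<dots> = cp X c (cp X q2 i2)" using assoc[of C' P C' C i2 q2 c] o b bb h by simp
  also have "\<dots> = c" using b h o by simp
  finally show ?thesis using b bb h o by blast
qed

end


context EX begin

lemma mor_unf: "stri_mor X (A,B,C,f,g,d) (A',B',C',f',g',d') (a,b,c) \<longleftrightarrow>
   rl X A B C f g d \<and> rl X A' B' C' f' g' d' \<and>
   a \<in> hom X A A' \<and> b \<in> hom X B B' \<and> c \<in> hom X C C' \<and>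
   cp X b f = cp X f' a \<and> cp X c g = cp X g' b \<and> push X a d = pull X c d'"
  by (simp add: stri_mor_def is_stri_def)

lemma FB: assumes m: "stri_mor X (A,B,C,f,g,d) (A',B',C',f',g',d') (a,b,c)"
  shows "(\<exists>u\<in>hom X B A'. a = cp X u f) \<longleftrightarrow> (\<exists>v\<in>hom X C B'. c = cp X g' v)"
proof -
  have r: "rl X A B C f g d" and r': "rl X A' B' C' f' g' d'" and h: "a \<in> hom X A A'" "b \<in> hom X B B'" "c \<in> hom X C C'"
    and e: "push X a d = pull X c d'" using m by (simp_all add: mor_unf)
  have o: "A \<in> ob X" "B \<in> ob X" "C \<in> ob X" "f \<in> hom X A B" "g \<in> hom X B C" "d \<in> ext X C A"
    using RL[OF r] by auto
  have o': "A' \<in> ob X" "B' \<in> ob X" "C' \<in> ob X" "f' \<in> hom X A' B'" "g' \<in> hom X B' C'" "d' \<in> ext X C' A'"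
    using RL[OF r'] by auto
  show ?thesis
  proof
    assume "\<exists>u\<in>hom X B A'. a = cp X u f"
    then obtain u where u: "u \<in> hom X B A'" "a = cp X u f" by blast
    have "push X a d = push X u (push X f d)" using u o o' push_cp by blast
    also have "\<dots> = ezr X C A'" using E1[OF r] u o o' by simp
    finally have "pull X c d' = ezr X C A'" using e by simp
    then show "\<exists>v\<in>hom X C B'. c = cp X g' v" using E4[OF r' _ h(3)] o by blast
  next
    assume "\<exists>v\<in>hom X C B'. c = cp X g' v"
    then obtain v where v: "v \<in> hom X C B'" "c = cp X g' v" by blast
    have "pull X c d' = pull X v (pull X g' d')" using v o o' pull_cp by blast
    also have "\<dots> = ezr X C A'" using E2[OF r'] v o o' by simp
    finally have "push X a d = ezr X C A'" using e by simp
    then show "\<exists>u\<in>hom X B A'. a = cp X u f" using E3[OF r _ h(1)] o' by blast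
  qed
qed

lemma mor_comp: assumes p: "stri_mor X (X1,X2,X3,f1,f2,d) (Y1,Y2,Y3,g1,g2,d') (p1,p2,p3)"
  and q: "stri_mor X (W1,W2,W3,w1,w2,e) (X1,X2,X3,f1,f2,d) (q1,q2,q3)"
  shows "stri_mor X (W1,W2,W3,w1,w2,e) (Y1,Y2,Y3,g1,g2,d') (cp X p1 q1, cp X p2 q2, cp X p3 q3)"
proof -
  have r: "rl X X1 X2 X3 f1 f2 d" and r': "rl X Y1 Y2 Y3 g1 g2 d'" and h: "p1 \<in> hom X X1 Y1" "p2 \<in> hom X X2 Y2" "p3 \<in> hom X X3 Y3"
    and c1: "cp X p2 f1 = cp X g1 p1" and c2: "cp X p3 f2 = cp X g2 p2"
    and e: "push X p1 d = pull X p3 d'" using p by (simp_all add: mor_unf)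
  have rw: "rl X W1 W2 W3 w1 w2 e" and hq: "q1 \<in> hom X W1 X1" "q2 \<in> hom X W2 X2" "q3 \<in> hom X W3 X3"
    and k1: "cp X q2 w1 = cp X f1 q1" and k2: "cp X q3 w2 = cp X f2 q2"
    and ee: "push X q1 e = pull X q3 d" using q by (simp_all add: mor_unf)
  note o = RL[OF r] and o' = RL[OF r'] and ow = RL[OF rw]
  have "cp X (cp X p2 q2) w1 = cp X p2 (cp X q2 w1)" using assoc[of W1 W2 X2 Y2 w1 q2 p2] o o' ow h hq by simp
  also have "\<dots> = cp X p2 (cp X f1 q1)" using k1 by simp
  also have "\<dots> = cp X (cp X p2 f1) q1" using assoc[of W1 X1 X2 Y2 q1 f1 p2] o o' ow h hq by simp
  also have "\<dots> = cp X (cp X g1 p1) q1" using c1 by simp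
  also have "\<dots> = cp X g1 (cp X p1 q1)" using assoc[of W1 X1 Y1 Y2 q1 p1 g1] o o' ow h hq by simp
  finally have m1: "cp X (cp X p2 q2) w1 = cp X g1 (cp X p1 q1)" .
  have "cp X (cp X p3 q3) w2 = cp X p3 (cp X q3 w2)" using assoc[of W2 W3 X3 Y3 w2 q3 p3] o o' ow h hq by simp
  also have "\<dots> = cp X p3 (cp X f2 q2)" using k2 by simp
  also have "\<dots> = cp X (cp X p3 f2) q2" using assoc[of W2 X2 X3 Y3 q2 f2 p3] o o' ow h hq by simp
  also have "\<dots> = cp X (cp X g2 p2) q2" using c2 by simp
  also have "\<dots> = cp X g2 (cp X p2 q2)" using assoc[of W2 X2 Y2 Y3 q2 p2 g2] o o' ow h hq by simp
  finally have m2: "cp X (cp X p3 q3) w2 = cp X g2 (cp X p2 q2)" .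
  have "push X (cp X p1 q1) e = push X p1 (push X q1 e)" using push_cp[of W1 X1 Y1 W3 q1 p1 e] o o' ow h hq by simp
  also have "\<dots> = push X p1 (pull X q3 d)" using ee by simp
  also have "\<dots> = pull X q3 (push X p1 d)" using push_pull[of X1 Y1 X3 W3 p1 q3 d] o o' ow h hq by simp
  also have "\<dots> = pull X q3 (pull X p3 d')" using e by simp
  also have "\<dots> = pull X (cp X p3 q3) d'" using pull_cp[of Y1 Y3 X3 W3 p3 q3 d'] o o' ow h hq by simp
  finally have m3: "push X (cp X p1 q1) e = pull X (cp X p3 q3) d'" .
  show ?thesis unfolding mor_unf using m1 m2 m3 rw r' o o' ow h hq cp_hom by metis
qed

lemma mor_diff: assumes q: "stri_mor X (W1,W2,W3,w1,w2,e) (X1,X2,X3,f1,f2,d) (a1,a2,a3)"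
  and q': "stri_mor X (W1,W2,W3,w1,w2,e) (X1,X2,X3,f1,f2,d) (b1,b2,b3)"
  shows "stri_mor X (W1,W2,W3,w1,w2,e) (X1,X2,X3,f1,f2,d) (ad X a1 (ng X b1), ad X a2 (ng X b2), ad X a3 (ng X b3))"
proof -
  have rw: "rl X W1 W2 W3 w1 w2 e" and r: "rl X X1 X2 X3 f1 f2 d"
    and ha: "a1 \<in> hom X W1 X1" "a2 \<in> hom X W2 X2" "a3 \<in> hom X W3 X3"
    and ka1: "cp X a2 w1 = cp X f1 a1" and ka2: "cp X a3 w2 = cp X f2 a2"
    and ea: "push X a1 e = pull X a3 d" using q by (simp_all add: mor_unf)
  have hb: "b1 \<in> hom X W1 X1" "b2 \<in> hom X W2 X2" "b3 \<in> hom X W3 X3"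
    and kb1: "cp X b2 w1 = cp X f1 b1" and kb2: "cp X b3 w2 = cp X f2 b2"
    and eb: "push X b1 e = pull X b3 d" using q' by (simp_all add: mor_unf)
  have o: "X1 \<in> ob X" "X2 \<in> ob X" "X3 \<in> ob X" "f1 \<in> hom X X1 X2" "f2 \<in> hom X X2 X3" "d \<in> ext X X3 X1"
    using RL[OF r] by auto
  have ow: "W1 \<in> ob X" "W2 \<in> ob X" "W3 \<in> ob X" "w1 \<in> hom X W1 W2" "w2 \<in> hom X W2 W3" "e \<in> ext X W3 W1"
    using RL[OF rw] by auto
  have "cp X (ad X a2 (ng X b2)) w1 = ad X (cp X a2 w1) (cp X (ng X b2) w1)"
    using dist_r[of W1 W2 X2 w1 a2 "ng X b2"] o ow ha hb ng_hom by blast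
  also have "\<dots> = ad X (cp X a2 w1) (ng X (cp X b2 w1))" using cp_ng_l[of W1 W2 X2 w1 b2] o ow hb by simp
  also have "\<dots> = ad X (cp X f1 a1) (ng X (cp X f1 b1))" using ka1 kb1 by simp
  also have "\<dots> = ad X (cp X f1 a1) (cp X f1 (ng X b1))" using cp_ng_r[of W1 X1 X2 b1 f1] o ow hb by simp
  also have "\<dots> = cp X f1 (ad X a1 (ng X b1))" using dist_l[of W1 X1 X2 a1 "ng X b1" f1] o ow ha hb ng_hom by metis
  finally have m1: "cp X (ad X a2 (ng X b2)) w1 = cp X f1 (ad X a1 (ng X b1))" .
  have "cp X (ad X a3 (ng X b3)) w2 = ad X (cp X a3 w2) (cp X (ng X b3) w2)"
    using dist_r[of W2 W3 X3 w2 a3 "ng X b3"] o ow ha hb ng_hom by blast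
  also have "\<dots> = ad X (cp X a3 w2) (ng X (cp X b3 w2))" using cp_ng_l[of W2 W3 X3 w2 b3] o ow hb by simp
  also have "\<dots> = ad X (cp X f2 a2) (ng X (cp X f2 b2))" using ka2 kb2 by simp
  also have "\<dots> = ad X (cp X f2 a2) (cp X f2 (ng X b2))" using cp_ng_r[of W2 X2 X3 b2 f2] o ow hb by simp
  also have "\<dots> = cp X f2 (ad X a2 (ng X b2))" using dist_l[of W2 X2 X3 a2 "ng X b2" f2] o ow ha hb ng_hom by metis
  finally have m2: "cp X (ad X a3 (ng X b3)) w2 = cp X f2 (ad X a2 (ng X b2))" .
  have "push X (ad X a1 (ng X b1)) e = ead X (push X a1 e) (push X (ng X b1) e)"
    using push_add[of W1 X1 W3 a1 "ng X b1" e e] o ow ha hb ng_hom by blast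
  also have "\<dots> = ead X (push X a1 e) (eng X (push X b1 e))" using push_ng[of W1 X1 W3 b1 e] o ow hb by simp
  also have "\<dots> = ead X (pull X a3 d) (eng X (pull X b3 d))" using ea eb by simp
  also have "\<dots> = ead X (pull X a3 d) (pull X (ng X b3) d)" using pull_ng[of X1 X3 W3 b3 d] o ow hb by simp
  also have "\<dots> = pull X (ad X a3 (ng X b3)) d"
    using pull_add[of X1 X3 W3 a3 "ng X b3" d d] o ow ha hb ng_hom by metis
  finally have m3: "push X (ad X a1 (ng X b1)) e = pull X (ad X a3 (ng X b3)) d" .
  show ?thesis unfolding mor_unf using m1 m2 m3 rw r o ow ha hb ad_hom ng_hom by metis
qed

lemma mor_zero: assumes "is_stri X (W1,W2,W3,w1,w2,e)" "is_stri X (X1,X2,X3,f1,f2,d)"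
  shows "stri_mor X (W1,W2,W3,w1,w2,e) (X1,X2,X3,f1,f2,d) (stri_zero X (W1,W2,W3,w1,w2,e) (X1,X2,X3,f1,f2,d))"
proof -
  have rw: "rl X W1 W2 W3 w1 w2 e" and r: "rl X X1 X2 X3 f1 f2 d" using assms by (simp_all add: is_stri_def)
  have o: "X1 \<in> ob X" "X2 \<in> ob X" "X3 \<in> ob X" "f1 \<in> hom X X1 X2" "f2 \<in> hom X X2 X3" "d \<in> ext X X3 X1"
    using RL[OF r] by auto
  have ow: "W1 \<in> ob X" "W2 \<in> ob X" "W3 \<in> ob X" "w1 \<in> hom X W1 W2" "w2 \<in> hom X W2 W3" "e \<in> ext X W3 W1"
    using RL[OF rw] by auto
  show ?thesis using rw r o ow by (simp add: stri_zero_def mor_unf)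
qed

lemma main:
  assumes mor: "stri_mor X (X1,X2,X3,f1,f2,d) (Y1,Y2,Y3,g1,g2,d') (p1,p2,p3)"
    and bp: "biprod X X2 Y1 P i1 i2 q1 q2"
  shows "(quot_eq X (X1,X2,X3,f1,f2,d) (Y1,Y2,Y3,g1,g2,d') (p1,p2,p3)
              (stri_zero X (X1,X2,X3,f1,f2,d) (Y1,Y2,Y3,g1,g2,d'))
            \<longleftrightarrow> (\<exists>u\<in>hom X X2 Y1. p1 = cp X u f1))
       \<and> ((\<exists>u\<in>hom X X2 Y1. p1 = cp X u f1) \<longleftrightarrow> (\<exists>v\<in>hom X X3 Y2. p3 = cp X g2 v))
       \<and> (quot_mono X (X1,X2,X3,f1,f2,d) (Y1,Y2,Y3,g1,g2,d') (p1,p2,p3)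
            \<longleftrightarrow> (\<exists>r\<in>hom X P X1. cp X r (ad X (cp X i1 f1) (cp X i2 p1)) = ide X X1))"
proof -
  have r: "rl X X1 X2 X3 f1 f2 d" and r': "rl X Y1 Y2 Y3 g1 g2 d'"
    and h: "p1 \<in> hom X X1 Y1" "p2 \<in> hom X X2 Y2" "p3 \<in> hom X X3 Y3"
    and c1: "cp X p2 f1 = cp X g1 p1" and c2: "cp X p3 f2 = cp X g2 p2"
    and e: "push X p1 d = pull X p3 d'" using mor by (simp_all add: mor_unf)
  have o: "X1 \<in> ob X" "X2 \<in> ob X" "X3 \<in> ob X" "f1 \<in> hom X X1 X2" "f2 \<in> hom X X2 X3" "d \<in> ext X X3 X1"
    using RL[OF r] by auto
  have o': "Y1 \<in> ob X" "Y2 \<in> ob X" "Y3 \<in> ob X" "g1 \<in> hom X Y1 Y2" "g2 \<in> hom X Y2 Y3" "d' \<in> ext X Y3 Y1"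
    using RL[OF r'] by auto
  note b = bp_facts[OF bp]
  have fb: "(\<exists>u\<in>hom X X2 Y1. p1 = cp X u f1) \<longleftrightarrow> (\<exists>v\<in>hom X X3 Y2. p3 = cp X g2 v)"
    using FB[OF mor] .
  have dz: "stri_diff X (p1,p2,p3) (stri_zero X (X1,X2,X3,f1,f2,d) (Y1,Y2,Y3,g1,g2,d')) = (p1,p2,p3)"
    using o o' h by (simp add: stri_diff_def stri_zero_def)
  have part1: "quot_eq X (X1,X2,X3,f1,f2,d) (Y1,Y2,Y3,g1,g2,d') (p1,p2,p3)
              (stri_zero X (X1,X2,X3,f1,f2,d) (Y1,Y2,Y3,g1,g2,d'))
            \<longleftrightarrow> (\<exists>v\<in>hom X X3 Y2. p3 = cp X g2 v)"
    unfolding quot_eq_def dz using mor by (simp add: R2_def)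
  define h1 where "h1 = ad X (cp X i1 f1) (cp X i2 p1)"
  have h1hom: "h1 \<in> hom X X1 P" unfolding h1_def using o o' h b by blast
  have part2: "quot_mono X (X1,X2,X3,f1,f2,d) (Y1,Y2,Y3,g1,g2,d') (p1,p2,p3)
            \<longleftrightarrow> (\<exists>rr\<in>hom X P X1. cp X rr h1 = ide X X1)"
  proof
    assume qm: "quot_mono X (X1,X2,X3,f1,f2,d) (Y1,Y2,Y3,g1,g2,d') (p1,p2,p3)"
    define eps where "eps = push X p1 d"
    have eps: "eps \<in> ext X X3 Y1" unfolding eps_def using o o' h push_ext by blast
    obtain M m n where rM: "rl X Y1 M X3 m n eps" using RL_ex[OF o'(1) o(3) eps] by blast
    have oM: "M \<in> ob X" "m \<in> hom X Y1 M" "n \<in> hom X M X3" using RL[OF rM] by auto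
    have pn: "pull X n d \<in> ext X M X1" using o oM pull_ext by blast
    obtain W2 w1 w2 where rW: "rl X X1 W2 M w1 w2 (pull X n d)" using RL_ex[OF o(1) oM(1) pn] by blast
    have oW: "W2 \<in> ob X" "w1 \<in> hom X X1 W2" "w2 \<in> hom X W2 M" using RL[OF rW] by auto
    have "push X (ide X X1) (pull X n d) = pull X n d" using o oM pn by simp
    from ET2a[OF rW r _ oM(3) this] o obtain q2' where
      q2': "q2' \<in> hom X W2 X2" "cp X q2' w1 = cp X f1 (ide X X1)" "cp X f2 q2' = cp X n w2" by blast
    have qmor: "stri_mor X (X1,W2,M,w1,w2,pull X n d) (X1,X2,X3,f1,f2,d) (ide X X1, q2', n)"
      unfolding mor_unf using rW r o oM q2' pn by simp
    have zmor: "stri_mor X (X1,W2,M,w1,w2,pull X n d) (X1,X2,X3,f1,f2,d)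
         (stri_zero X (X1,W2,M,w1,w2,pull X n d) (X1,X2,X3,f1,f2,d))"
      using mor_zero rW r by (simp add: is_stri_def)
    have cm: "stri_mor X (X1,W2,M,w1,w2,pull X n d) (Y1,Y2,Y3,g1,g2,d') (cp X p1 (ide X X1), cp X p2 q2', cp X p3 n)"
      using mor_comp[OF mor qmor] .
    have "pull X (cp X p3 n) d' = pull X n (pull X p3 d')" using pull_cp[of Y1 Y3 X3 M p3 n d'] o o' oM h by simp
    also have "\<dots> = pull X n eps" using e eps_def by simp
    also have "\<dots> = ezr X M Y1" using E2[OF rM] .
    finally have "\<exists>v\<in>hom X M Y2. cp X p3 n = cp X g2 v" using E4[OF r' oM(1)] o o' oM h cp_hom by blast
    moreover have "stri_diff X (stri_comp X (p1,p2,p3) (ide X X1, q2', n))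
          (stri_comp X (p1,p2,p3) (stri_zero X (X1,W2,M,w1,w2,pull X n d) (X1,X2,X3,f1,f2,d)))
        = (cp X p1 (ide X X1), cp X p2 q2', cp X p3 n)"
      using o o' oM oW h q2' cp_hom by (simp add: stri_diff_def stri_comp_def stri_zero_def)
    ultimately have "quot_eq X (X1,W2,M,w1,w2,pull X n d) (Y1,Y2,Y3,g1,g2,d')
        (stri_comp X (p1,p2,p3) (ide X X1, q2', n))
        (stri_comp X (p1,p2,p3) (stri_zero X (X1,W2,M,w1,w2,pull X n d) (X1,X2,X3,f1,f2,d)))"
      unfolding quot_eq_def using cm by (simp add: R2_def)
    then have "quot_eq X (X1,W2,M,w1,w2,pull X n d) (X1,X2,X3,f1,f2,d) (ide X X1, q2', n)
         (stri_zero X (X1,W2,M,w1,w2,pull X n d) (X1,X2,X3,f1,f2,d))"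
      using qm qmor zmor rW unfolding quot_mono_def is_stri_def by blast
    moreover have "stri_diff X (ide X X1, q2', n) (stri_zero X (X1,W2,M,w1,w2,pull X n d) (X1,X2,X3,f1,f2,d))
        = (ide X X1, q2', n)"
      using o oM oW q2' by (simp add: stri_diff_def stri_zero_def)
    ultimately obtain v where v: "v \<in> hom X M X2" "n = cp X f2 v"
      unfolding quot_eq_def by (auto simp: R2_def)
    have "cp X (ide X X3) n = cp X f2 v" using v o oM by simp
    from ET3opr[OF rM r v(1) _ this] o obtain x where
      x: "x \<in> hom X Y1 X1" "push X x eps = pull X (ide X X3) d" by blast
    define t where "t = cp X x p1"
    have t: "t \<in> hom X X1 X1" unfolding t_def using x h o o' cp_hom by blast
    have pt: "push X t d = d" unfolding t_def using push_cp[of X1 Y1 X1 X3 p1 x d] x h o o' eps_def by simp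
    have "push X (ad X (ide X X1) (ng X t)) d = ead X (push X (ide X X1) d) (push X (ng X t) d)"
      using push_add[of X1 X1 X3 "ide X X1" "ng X t" d d] o t ng_hom by blast
    also have "\<dots> = ead X d (eng X d)" using push_ng[of X1 X1 X3 t d] o t pt by simp
    also have "\<dots> = ezr X X3 X1" using ag_ninv[OF EG[of X3 X1]] o by blast
    finally obtain y where y: "y \<in> hom X X2 X1" "ad X (ide X X1) (ng X t) = cp X y f1"
      using E3[OF r o(1)] o t ng_hom ide_hom ad_hom by metis
    have idt: "ide X X1 = ad X (cp X y f1) t"
      using ag_sub[OF HG[of X1 X1]] y o t by blast
    define rr where "rr = ad X (cp X y q1) (cp X x q2)"
    have rr: "rr \<in> hom X P X1" unfolding rr_def using b x y o o' cp_hom ad_hom by metis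
    have "cp X rr i1 = ad X (cp X (cp X y q1) i1) (cp X (cp X x q2) i1)"
      unfolding rr_def using dist_r[of X2 P X1 i1 "cp X y q1" "cp X x q2"] b x y o o' cp_hom by metis
    also have "\<dots> = ad X (cp X y (cp X q1 i1)) (cp X x (cp X q2 i1))"
      using assoc[of X2 P X2 X1 i1 q1 y] assoc[of X2 P Y1 X1 i1 q2 x] b x y o o' by simp
    also have "\<dots> = y" using b x y o o' by simp
    finally have ri1: "cp X rr i1 = y" .
    have "cp X rr i2 = ad X (cp X (cp X y q1) i2) (cp X (cp X x q2) i2)"
      unfolding rr_def using dist_r[of Y1 P X1 i2 "cp X y q1" "cp X x q2"] b x y o o' cp_hom by metis
    also have "\<dots> = ad X (cp X y (cp X q1 i2)) (cp X x (cp X q2 i2))"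
      using assoc[of Y1 P X2 X1 i2 q1 y] assoc[of Y1 P Y1 X1 i2 q2 x] b x y o o' by simp
    also have "\<dots> = x" using b x y o o' by simp
    finally have ri2: "cp X rr i2 = x" .
    have "cp X rr h1 = ad X (cp X rr (cp X i1 f1)) (cp X rr (cp X i2 p1))"
      unfolding h1_def using dist_l[of X1 P X1 "cp X i1 f1" "cp X i2 p1" rr] rr b o o' h cp_hom by metis
    also have "\<dots> = ad X (cp X (cp X rr i1) f1) (cp X (cp X rr i2) p1)"
      using assoc[of X1 X2 P X1 f1 i1 rr] assoc[of X1 Y1 P X1 p1 i2 rr] rr b o o' h by simp
    also have "\<dots> = ide X X1" using ri1 ri2 idt t_def by simp
    finally show "\<exists>rr\<in>hom X P X1. cp X rr h1 = ide X X1" using rr by blast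
  next
    assume "\<exists>rr\<in>hom X P X1. cp X rr h1 = ide X X1"
    then obtain rr where rr: "rr \<in> hom X P X1" "cp X rr h1 = ide X X1" by blast
    show "quot_mono X (X1,X2,X3,f1,f2,d) (Y1,Y2,Y3,g1,g2,d') (p1,p2,p3)"
      unfolding quot_mono_def
    proof (intro allI impI)
      fix W q q'
      assume as: "is_stri X W \<and> stri_mor X W (X1,X2,X3,f1,f2,d) q \<and> stri_mor X W (X1,X2,X3,f1,f2,d) q' \<and>
        quot_eq X W (Y1,Y2,Y3,g1,g2,d') (stri_comp X (p1,p2,p3) q) (stri_comp X (p1,p2,p3) q')"
      obtain W1 W2 W3 w1 w2 ee where W: "W = (W1,W2,W3,w1,w2,ee)" by (cases W) auto
      obtain a1 a2 a3 where q: "q = (a1,a2,a3)" by (cases q) auto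
      obtain b1 b2 b3 where q': "q' = (b1,b2,b3)" by (cases q') auto
      have qm: "stri_mor X (W1,W2,W3,w1,w2,ee) (X1,X2,X3,f1,f2,d) (a1,a2,a3)" using as W q by simp
      have qm': "stri_mor X (W1,W2,W3,w1,w2,ee) (X1,X2,X3,f1,f2,d) (b1,b2,b3)" using as W q' by simp
      have rw: "rl X W1 W2 W3 w1 w2 ee" using qm by (simp add: mor_unf)
      have ow: "W1 \<in> ob X" "W2 \<in> ob X" "W3 \<in> ob X" "w1 \<in> hom X W1 W2" "w2 \<in> hom X W2 W3" "ee \<in> ext X W3 W1"
        using RL[OF rw] by auto
      have ha: "a1 \<in> hom X W1 X1" "a2 \<in> hom X W2 X2" "a3 \<in> hom X W3 X3" using qm by (simp_all add: mor_unf)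
      have hb: "b1 \<in> hom X W1 X1" "b2 \<in> hom X W2 X2" "b3 \<in> hom X W3 X3" using qm' by (simp_all add: mor_unf)
      have "R2 X (W1,W2,W3,w1,w2,ee) (Y1,Y2,Y3,g1,g2,d')
          (ad X (cp X p1 a1) (ng X (cp X p1 b1)), ad X (cp X p2 a2) (ng X (cp X p2 b2)), ad X (cp X p3 a3) (ng X (cp X p3 b3)))"
        using as W q q' by (simp add: quot_eq_def stri_comp_def stri_diff_def)
      then have Dm: "stri_mor X (W1,W2,W3,w1,w2,ee) (Y1,Y2,Y3,g1,g2,d')
          (ad X (cp X p1 a1) (ng X (cp X p1 b1)), ad X (cp X p2 a2) (ng X (cp X p2 b2)), ad X (cp X p3 a3) (ng X (cp X p3 b3)))"
        and "\<exists>v\<in>hom X W3 Y2. ad X (cp X p3 a3) (ng X (cp X p3 b3)) = cp X g2 v"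
        by (simp_all add: R2_def)
      then obtain u where u: "u \<in> hom X W2 Y1" "ad X (cp X p1 a1) (ng X (cp X p1 b1)) = cp X u w1"
        using FB[OF Dm] by blast
      define s1 where "s1 = ad X a1 (ng X b1)"
      define s2 where "s2 = ad X a2 (ng X b2)"
      define s3 where "s3 = ad X a3 (ng X b3)"
      have sm: "stri_mor X (W1,W2,W3,w1,w2,ee) (X1,X2,X3,f1,f2,d) (s1,s2,s3)"
        unfolding s1_def s2_def s3_def using mor_diff[OF qm qm'] .
      have hs: "s1 \<in> hom X W1 X1" "s2 \<in> hom X W2 X2" and ks: "cp X s2 w1 = cp X f1 s1"
        using sm by (simp_all add: mor_unf)
      have "cp X p1 s1 = ad X (cp X p1 a1) (cp X p1 (ng X b1))"
        unfolding s1_def using dist_l[of W1 X1 Y1 a1 "ng X b1" p1] ow o o' h ha hb ng_hom by metis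
      also have "\<dots> = ad X (cp X p1 a1) (ng X (cp X p1 b1))" using cp_ng_r[of W1 X1 Y1 b1 p1] ow o o' h hb by simp
      finally have ps: "cp X p1 s1 = cp X u w1" using u by simp
      define k where "k = ad X (cp X i1 s2) (cp X i2 u)"
      have k: "k \<in> hom X W2 P" unfolding k_def using b hs u ow o o' cp_hom ad_hom by metis
      have "cp X k w1 = ad X (cp X (cp X i1 s2) w1) (cp X (cp X i2 u) w1)"
        unfolding k_def using dist_r[of W1 W2 P w1 "cp X i1 s2" "cp X i2 u"] b hs u ow o o' cp_hom by metis
      also have "\<dots> = ad X (cp X i1 (cp X s2 w1)) (cp X i2 (cp X u w1))"
        using assoc[of W1 W2 X2 P w1 s2 i1] assoc[of W1 W2 Y1 P w1 u i2] b hs u ow o o' by simp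
      also have "\<dots> = ad X (cp X i1 (cp X f1 s1)) (cp X i2 (cp X p1 s1))" using ks ps by simp
      also have "\<dots> = ad X (cp X (cp X i1 f1) s1) (cp X (cp X i2 p1) s1)"
        using assoc[of W1 X1 X2 P s1 f1 i1] assoc[of W1 X1 Y1 P s1 p1 i2] b hs h ow o o' by simp
      also have "\<dots> = cp X h1 s1"
        unfolding h1_def using dist_r[of W1 X1 P s1 "cp X i1 f1" "cp X i2 p1"] b hs h ow o o' cp_hom by metis
      finally have kw: "cp X k w1 = cp X h1 s1" .
      have "cp X (cp X rr k) w1 = cp X rr (cp X k w1)" using assoc[of W1 W2 P X1 w1 k rr] k rr ow o b by simp
      also have "\<dots> = cp X (cp X rr h1) s1" using kw assoc[of W1 X1 P X1 s1 h1 rr] h1hom rr hs ow o b by simp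
      also have "\<dots> = s1" using rr hs ow o by simp
      finally have "\<exists>t\<in>hom X W2 X1. s1 = cp X t w1" using rr k ow o b cp_hom by metis
      then have "\<exists>v\<in>hom X W3 X2. s3 = cp X f2 v" using FB[OF sm] by blast
      then have "R2 X (W1,W2,W3,w1,w2,ee) (X1,X2,X3,f1,f2,d) (s1,s2,s3)" using sm by (simp add: R2_def)
      then show "quot_eq X W (X1,X2,X3,f1,f2,d) q q'"
        using W q q' by (simp add: quot_eq_def stri_diff_def s1_def s2_def s3_def)
    qed
  qed
  show ?thesis using part1 part2 fb h1_def by blast
qed

end

theorem lemma4p2:
  fixes X :: "('o,'m,'e) extri"
    and X1 X2 X3 Y1 Y2 Y3 P :: 'o
    and f1 f2 g1 g2 p1 p2 p3 i1 i2 q1 q2 :: 'm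
    and d d' :: 'e
  assumes "extriangulated X"
    and mor: "stri_mor X (X1,X2,X3,f1,f2,d) (Y1,Y2,Y3,g1,g2,d') (p1,p2,p3)"
    and bp: "biprod X X2 Y1 P i1 i2 q1 q2"
  shows "(quot_eq X (X1,X2,X3,f1,f2,d) (Y1,Y2,Y3,g1,g2,d') (p1,p2,p3)
              (stri_zero X (X1,X2,X3,f1,f2,d) (Y1,Y2,Y3,g1,g2,d'))
            \<longleftrightarrow> (\<exists>u\<in>hom X X2 Y1. p1 = cp X u f1))
       \<and> ((\<exists>u\<in>hom X X2 Y1. p1 = cp X u f1) \<longleftrightarrow> (\<exists>v\<in>hom X X3 Y2. p3 = cp X g2 v))
       \<and> (quot_mono X (X1,X2,X3,f1,f2,d) (Y1,Y2,Y3,g1,g2,d') (p1,p2,p3)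
            \<longleftrightarrow> (\<exists>r\<in>hom X P X1. cp X r (ad X (cp X i1 f1) (cp X i2 p1)) = ide X X1))"
  proof -
  interpret EX X by unfold_locales (rule assms(1))
  show ?thesis using main[OF mor bp] .
qed

end
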